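(* Let $\tilde V\in C^2(\mathbb{R},\mathbb{R})$ satisfy: $\tilde V\ge 0$, $\tilde V(-1)=\tilde V(1)=0$, $\tilde V(x)>0$ for $x\in(-1,1)$, $\tilde V''(-1)>0$, $\tilde V''(1)>0$, $\tilde V(x)>0$ and $\tilde V'(x)x>0$ for all $|x|>1$, and $\tilde V(x)\to+\infty$ as $|x|\to+\infty$. Let $a:\mathbb{R}\to\mathbb{R}$ be bounded and continuous with $\liminf_{|t|\to\infty}a(t)=a_\infty>\inf_{t\in\mathbb{R}}a(t)=a(0)>0$. Let $$W=\{x\in H^1_{loc}(\mathbb{R}): x+1\in H^1((-\infty,0]),\ x-1\in H^1([0,+\infty))\},$$ and for $\epsilon\ge 0$ let $J_\epsilon(x)=\int_{-\infty}^{+\infty}\left(\frac12|\dot x|^2+a(\epsilon t)\tilde V(x(t))\right)dt$ (so $J_0$ has the constant coefficient $a(0)$), and $J_\infty(x)=\int_{-\infty}^{+\infty}\left(\frac12|\dot x|^2+a_\infty\tilde V(x(t))\right)dt$. Set $\mathcal{B}_\epsilon=\inf_{x\in W}J_\epsilon(x)$, $\mathcal{B}_0=\inf_{x\in W}J_0(x)$, $\mathcal{B}_\infty=\inf_{x\in W}J_\infty(x)$. Then $\mathcal{B}_0<\mathcal{B}_\infty$ and $\lim_{\epsilon\to0}\mathcal{B}_\epsilon=\mathcal{B}_0$. *)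

theory Defs
  imports "HOL-Analysis.Analysis"
begin

text \<open>x is in H^1_loc(R) with (weak) derivative g: g is measurable, locally square
integrable, and x is the indefinite integral of g (continuous representative).\<close>
definition weak_deriv_loc :: "(real \<Rightarrow> real) \<Rightarrow> (real \<Rightarrow> real) \<Rightarrow> bool" where
  "weak_deriv_loc x g \<longleftrightarrow> g \<in> borel_measurable lborel \<and>
     (\<forall>s t. s \<le> t \<longrightarrow> set_integrable lborel {s..t} (\<lambda>u. (g u)\<^sup>2) \<and>
                       x t - x s = (LBINT u=s..t. g u))"

definition inW :: "(real \<Rightarrow> real) \<Rightarrow> (real \<Rightarrow> real) \<Rightarrow> bool" where
  "inW x g \<longleftrightarrow> weak_deriv_loc x g \<and>
     set_integrable lborel {..0} (\<lambda>t. (x t + 1)\<^sup>2) \<and>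
     set_integrable lborel {..0} (\<lambda>t. (g t)\<^sup>2) \<and>
     set_integrable lborel {0..} (\<lambda>t. (x t - 1)\<^sup>2) \<and>
     set_integrable lborel {0..} (\<lambda>t. (g t)\<^sup>2)"

text \<open>The action functional with time-dependent coefficient c (nonnegative integrand,
so the integral is taken in [0,\<infinity>]).\<close>
definition action :: "(real \<Rightarrow> real) \<Rightarrow> (real \<Rightarrow> real) \<Rightarrow> (real \<Rightarrow> real) \<Rightarrow> (real \<Rightarrow> real) \<Rightarrow> ennreal" where
  "action c V x g = (\<integral>\<^sup>+ t. ennreal ((g t)\<^sup>2 / 2 + c t * V (x t)) \<partial>lborel)"

definition Binf :: "(real \<Rightarrow> real) \<Rightarrow> (real \<Rightarrow> real) \<Rightarrow> ennreal" where
  "Binf c V = (INF xg \<in> {(x, g). inW x g}. action c V (fst xg) (snd xg))"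

end

theory Submission
  imports Defs
begin

lemma wd_int:
  assumes "weak_deriv_loc x g" "s \<le> t"
  shows "set_integrable lborel {s..t} g"
proof -
  have m: "g \<in> borel_measurable lborel" and i: "set_integrable lborel {s..t} (\<lambda>u. (g u)\<^sup>2)"
    using assms unfolding weak_deriv_loc_def by auto
  have c: "set_integrable lborel {s..t} (\<lambda>u. 1::real)"
    by (rule borel_integrable_atLeastAtMost') simp
  have "set_integrable lborel {s..t} (\<lambda>u. 1 + (g u)\<^sup>2)"
    using set_integral_add(1)[OF c i] by simp
  then show ?thesis
  proof (rule set_integrable_bound)
    show "set_borel_measurable lborel {s..t} g" using m
      by (simp add: set_borel_measurable_def)
    have ab: "\<bar>y\<bar> \<le> \<bar>1 + y\<^sup>2\<bar>" for y :: real
    proof (cases "\<bar>y\<bar> \<le> 1")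
      case True
      have "0 \<le> y\<^sup>2" by simp
      then have "\<bar>y\<bar> \<le> 1 + y\<^sup>2" using True by linarith
      then show ?thesis by simp
    next
      case False
      then have h1: "\<bar>y\<bar> * 1 \<le> \<bar>y\<bar> * \<bar>y\<bar>" by (intro mult_left_mono) auto
      have h2: "\<bar>y\<bar> * \<bar>y\<bar> = y\<^sup>2" by (simp add: power2_eq_square abs_mult_self_eq)
      have h3: "0 \<le> y\<^sup>2" by simp
      have "\<bar>y\<bar> \<le> 1 + y\<^sup>2" using h1 h2 h3 by linarith
      then show ?thesis by simp
    qed
    show "AE x in lborel. x \<in> {s..t} \<longrightarrow> norm (g x) \<le> norm (1 + (g x)\<^sup>2)"
    proof (intro AE_I2 impI)
      fix u
      show "norm (g u) \<le> norm (1 + (g u)\<^sup>2)" using ab[of "g u"] by (simp only: real_norm_def)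
    qed
  qed
qed

lemma wd_eq:
  assumes "weak_deriv_loc x g" "s \<le> t"
  shows "x t - x s = (LINT u:{s..t}|lborel. g u)"
proof -
  have "x t - x s = (LBINT u=s..t. g u)" using assms unfolding weak_deriv_loc_def by blast
  then show ?thesis using assms(2) by (simp add: interval_integral_Icc)
qed

lemma wd_cont:
  assumes "weak_deriv_loc x g"
  shows "continuous_on UNIV x"
proof -
  have "isCont x z" for z
  proof -
    let ?a = "z - 1" and ?b = "z + 1"
    have "set_integrable lborel {?a..?b} g" by (rule wd_int[OF assms]) simp
    then have gi: "g integrable_on {?a..?b}"
      by (rule set_borel_integral_eq_integral(1))
    have eq: "x t = x ?a + integral {?a..t} g" if "t \<in> {?a..?b}" for t
    proof -
      have at: "?a \<le> t" using that by simp
      have "x t - x ?a = integral {?a..t} g"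
        using wd_eq[OF assms at] set_borel_integral_eq_integral(2)[OF wd_int[OF assms at]]
        by simp
      then show ?thesis by linarith
    qed
    have "continuous_on {?a..?b} (\<lambda>t. x ?a + integral {?a..t} g)"
      by (rule continuous_on_add[OF continuous_on_const indefinite_integral_continuous_1[OF gi]])
    then have "continuous_on {?a..?b} x"
    proof (rule continuous_on_eq)
      fix t assume "t \<in> {?a..?b}"
      then show "x ?a + integral {?a..t} g = x t" by (rule eq[symmetric])
    qed
    then have "continuous_on {?a<..<?b} x"
      by (rule continuous_on_subset) auto
    then show ?thesis
      by (subst (asm) continuous_on_eq_continuous_at) auto
  qed
  then show ?thesis by (simp add: continuous_at_imp_continuous_on)
qed

lemma exists_low:
  fixes x :: "real \<Rightarrow> real"
  assumes si: "set_integrable lborel {..0} (\<lambda>t. (x t + 1)\<^sup>2)"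
  shows "\<exists>u. x u \<le> -1/2"
proof (rule ccontr)
  assume "\<not> ?thesis"
  then have h: "x u > -1/2" for u by (auto simp: not_le)
  have q: "(x u + 1)\<^sup>2 \<ge> 1/4" for u
  proof -
    have "1/2 \<le> x u + 1" using h[of u] by simp
    from power_mono[OF this, of 2] show ?thesis by (simp add: power2_eq_square)
  qed
  let ?I = "LINT t:{..0}|lborel. (x t + 1)\<^sup>2"
  obtain n :: nat where n: "4 * ?I < real n" using reals_Archimedean2 by blast
  have "real n / 4 = (LINT t:{-real n..0}|lborel. 1/4)"
    by (simp add: set_integral_const)
  also have "\<dots> \<le> (LINT t:{-real n..0}|lborel. (x t + 1)\<^sup>2)"
  proof (rule set_integral_mono)
    show "set_integrable lborel {-real n..0} (\<lambda>t. 1/4::real)" by (rule borel_integrable_atLeastAtMost') simp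
    show "set_integrable lborel {-real n..0} (\<lambda>t. (x t + 1)\<^sup>2)" by (rule set_integrable_subset[OF si]) auto
    show "\<And>t. t \<in> {-real n..0} \<Longrightarrow> 1/4 \<le> (x t + 1)\<^sup>2" using q by blast
  qed
  also have "\<dots> \<le> ?I"
    unfolding set_lebesgue_integral_def
    by (rule integral_mono) (use si set_integrable_subset[OF si, of "{-real n..0}"] in
      \<open>auto simp: set_integrable_def split: split_indicator\<close>)
  finally show False using n by simp
qed

lemma exists_high:
  fixes x :: "real \<Rightarrow> real"
  assumes si: "set_integrable lborel {0..} (\<lambda>t. (x t - 1)\<^sup>2)"
  shows "\<exists>u. x u \<ge> 1/2"
proof (rule ccontr)
  assume "\<not> ?thesis"
  then have h: "x u < 1/2" for u by (auto simp: not_le)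
  have q: "(x u - 1)\<^sup>2 \<ge> 1/4" for u
  proof -
    have "1/2 \<le> 1 - x u" using h[of u] by simp
    from power_mono[OF this, of 2] show ?thesis by (simp add: power2_eq_square algebra_simps)
  qed
  let ?I = "LINT t:{0..}|lborel. (x t - 1)\<^sup>2"
  obtain n :: nat where n: "4 * ?I < real n" using reals_Archimedean2 by blast
  have "real n / 4 = (LINT t:{0..real n}|lborel. 1/4)"
    by (simp add: set_integral_const)
  also have "\<dots> \<le> (LINT t:{0..real n}|lborel. (x t - 1)\<^sup>2)"
  proof (rule set_integral_mono)
    show "set_integrable lborel {0..real n} (\<lambda>t. 1/4::real)" by (rule borel_integrable_atLeastAtMost') simp
    show "set_integrable lborel {0..real n} (\<lambda>t. (x t - 1)\<^sup>2)" by (rule set_integrable_subset[OF si]) auto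
    show "\<And>t. t \<in> {0..real n} \<Longrightarrow> 1/4 \<le> (x t - 1)\<^sup>2" using q by blast
  qed
  also have "\<dots> \<le> ?I"
    unfolding set_lebesgue_integral_def
    by (rule integral_mono) (use si set_integrable_subset[OF si, of "{0..real n}"] in
      \<open>auto simp: set_integrable_def split: split_indicator\<close>)
  finally show False using n by simp
qed

lemma crossing:
  fixes x :: "real \<Rightarrow> real"
  assumes c: "continuous_on UNIV x" and u: "x u \<le> \<alpha>" and w: "x w \<ge> \<beta>" and ab: "\<alpha> < \<beta>" and uw: "u \<le> w"
  shows "\<exists>p q. p < q \<and> x p \<le> \<alpha> \<and> x q \<ge> \<beta> \<and> (\<forall>r. p < r \<and> r < q \<longrightarrow> \<alpha> < x r \<and> x r < \<beta>)"
proof -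
  have ca: "\<And>z. isCont x z" using c by (simp add: continuous_on_eq_continuous_at)
  let ?S = "{u..w} \<inter> x -` {..\<alpha>}"
  have "compact ?S"
    by (intro compact_Int_closed compact_Icc continuous_closed_vimage ca closed_atMost)
  moreover have "u \<in> ?S" using u uw by auto
  ultimately obtain p where p: "p \<in> ?S" and pmax: "\<And>r. r \<in> ?S \<Longrightarrow> r \<le> p"
    using compact_attains_sup[of ?S] by blast
  let ?T = "{p..w} \<inter> x -` {\<beta>..}"
  have "compact ?T"
    by (intro compact_Int_closed compact_Icc continuous_closed_vimage ca closed_atLeast)
  moreover have "w \<in> ?T" using p w by auto
  ultimately obtain q where q: "q \<in> ?T" and qmin: "\<And>r. r \<in> ?T \<Longrightarrow> q \<le> r"
    using compact_attains_inf[of ?T] by blast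
  have "p \<noteq> q" using p q ab by auto
  with q have pq: "p < q" by auto
  show ?thesis
  proof (intro exI conjI allI impI)
    show "p < q" "x p \<le> \<alpha>" "x q \<ge> \<beta>" using pq p q by auto
    fix r assume r: "p < r \<and> r < q"
    then have "r \<notin> ?S" using pmax by force
    moreover have "r \<in> {u..w}" using r p q by auto
    ultimately show "\<alpha> < x r" by auto
    have "r \<notin> ?T" using qmin[of r] r by linarith
    moreover have "r \<in> {p..w}" using r p q by auto
    ultimately show "x r < \<beta>" by auto
  qed
qed

lemma cross_inW:
  assumes W: "inW x g"
  shows "\<exists>p q. p < q \<and> 1 \<le> \<bar>x q - x p\<bar> \<and> (\<forall>r. p < r \<and> r < q \<longrightarrow> \<bar>x r\<bar> < 1/2)"
proof -
  have wd: "weak_deriv_loc x g" using W unfolding inW_def by auto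
  have xc: "continuous_on UNIV x" by (rule wd_cont[OF wd])
  obtain u where u: "x u \<le> -1/2" using exists_low[of x] W unfolding inW_def by auto
  obtain w where w: "x w \<ge> 1/2" using exists_high[of x] W unfolding inW_def by auto
  show ?thesis
  proof (cases "u \<le> w")
    case True
    from crossing[OF xc u w _ True] obtain p q where
      "p < q" "x p \<le> -1/2" "x q \<ge> 1/2" "\<forall>r. p < r \<and> r < q \<longrightarrow> -1/2 < x r \<and> x r < 1/2" by auto
    then show ?thesis by (intro exI[of _ p] exI[of _ q]) auto
  next
    case False
    have xc': "continuous_on UNIV (\<lambda>t. - x t)" by (intro continuous_intros xc)
    have "\<exists>p q. p < q \<and> - x p \<le> -1/2 \<and> - x q \<ge> 1/2 \<and> (\<forall>r. p < r \<and> r < q \<longrightarrow> -1/2 < - x r \<and> - x r < 1/2)"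
      by (rule crossing[OF xc', where u=w and w=u]) (use w u False in auto)
    then obtain p q where
      "p < q" "- x p \<le> -1/2" "- x q \<ge> 1/2" "\<forall>r. p < r \<and> r < q \<longrightarrow> -1/2 < - x r \<and> - x r < 1/2" by auto
    then show ?thesis by (intro exI[of _ p] exI[of _ q]) auto
  qed
qed

lemma energy_lower:
  fixes x g V :: "real \<Rightarrow> real"
  assumes W: "inW x g" and Vm: "\<And>y. \<bar>y\<bar> < 1/2 \<Longrightarrow> m \<le> V y"
  shows "\<exists>L>0. ennreal (1/(2*L)) \<le> (\<integral>\<^sup>+t. ennreal ((g t)\<^sup>2/2) \<partial>lborel) \<and>
               ennreal (m*L) \<le> (\<integral>\<^sup>+t. ennreal (V (x t)) \<partial>lborel)"
proof -
  have wd: "weak_deriv_loc x g" using W unfolding inW_def by auto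
  obtain p q where pq: "p < q" and d: "1 \<le> \<bar>x q - x p\<bar>" and inn: "\<And>r. p < r \<Longrightarrow> r < q \<Longrightarrow> \<bar>x r\<bar> < 1/2"
    using cross_inW[OF W] by auto
  define L where "L = q - p"
  have L: "L > 0" using pq by (simp add: L_def)
  have gi: "set_integrable lborel {p..q} g" using wd_int[OF wd] pq by simp
  have g2i: "set_integrable lborel {p..q} (\<lambda>t. (g t)\<^sup>2)" using wd pq unfolding weak_deriv_loc_def by simp
  have agi: "set_integrable lborel {p..q} (\<lambda>t. \<bar>g t\<bar>)"
    using integrable_abs[of lborel "\<lambda>t. indicator {p..q} t *\<^sub>R g t"] gi unfolding set_integrable_def by (simp add: abs_mult)
  have "1 \<le> \<bar>LINT t:{p..q}|lborel. g t\<bar>" using d wd_eq[OF wd, of p q] pq by simp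
  also have "\<dots> \<le> (LINT t:{p..q}|lborel. \<bar>g t\<bar>)"
    using set_integral_norm_bound[OF gi] by simp
  finally have one: "1 \<le> (LINT t:{p..q}|lborel. \<bar>g t\<bar>)" .
  have ci: "set_integrable lborel {p..q} (\<lambda>t. 1/(2*L\<^sup>2)::real)" by (rule borel_integrable_atLeastAtMost') simp
  have "1/(2*L) = (1/L) * 1 - (1/(2*L\<^sup>2)) * L" using L by (simp add: field_simps power2_eq_square)
  also have "\<dots> \<le> (1/L) * (LINT t:{p..q}|lborel. \<bar>g t\<bar>) - (1/(2*L\<^sup>2)) * L"
    using one L by (intro diff_right_mono mult_left_mono) auto
  also have "\<dots> = (LINT t:{p..q}|lborel. (1/L) * \<bar>g t\<bar> - 1/(2*L\<^sup>2))"
    using pq by (subst set_integral_diff(2)) (auto intro: agi ci borel_integrable_atLeastAtMost' simp: set_integral_const L_def)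
  also have "\<dots> \<le> (LINT t:{p..q}|lborel. (g t)\<^sup>2/2)"
  proof (rule set_integral_mono)
    show "set_integrable lborel {p..q} (\<lambda>t. 1 / L * \<bar>g t\<bar> - 1 / (2 * L\<^sup>2))"
      using agi ci by (intro set_integral_diff(1)) (auto simp: set_integrable_mult_right)
    show "set_integrable lborel {p..q} (\<lambda>t. (g t)\<^sup>2 / 2)"
      using g2i by (simp add: set_integrable_divide)
    fix t
    have "0 \<le> (\<bar>g t\<bar> - 1/L)\<^sup>2 / 2" by simp
    also have "\<dots> = (g t)\<^sup>2/2 - (1 / L * \<bar>g t\<bar> - 1 / (2 * L\<^sup>2))"
      using L by (simp add: power2_eq_square field_simps)
    finally show "1 / L * \<bar>g t\<bar> - 1 / (2 * L\<^sup>2) \<le> (g t)\<^sup>2 / 2" by simp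
  qed
  finally have K: "1/(2*L) \<le> (LINT t:{p..q}|lborel. (g t)\<^sup>2/2)" .
  have g2i': "integrable lborel (\<lambda>t. indicator {p..q} t * ((g t)\<^sup>2/2))"
    using set_integrable_divide[OF g2i, of 2] unfolding set_integrable_def by simp
  have "ennreal (1/(2*L)) \<le> ennreal (LINT t:{p..q}|lborel. (g t)\<^sup>2/2)"
    using K by (rule ennreal_leI)
  also have "\<dots> = (\<integral>\<^sup>+t. ennreal (indicator {p..q} t * ((g t)\<^sup>2/2)) \<partial>lborel)"
    unfolding set_lebesgue_integral_def
    by (subst nn_integral_eq_integral[OF g2i']) (auto simp: indicator_def)
  also have "\<dots> \<le> (\<integral>\<^sup>+t. ennreal ((g t)\<^sup>2/2) \<partial>lborel)"
    by (intro nn_integral_mono ennreal_leI) (auto simp: indicator_def)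
  finally have KK: "ennreal (1/(2*L)) \<le> (\<integral>\<^sup>+t. ennreal ((g t)\<^sup>2/2) \<partial>lborel)" .
  have "ennreal (m*L) = (\<integral>\<^sup>+t. ennreal m * indicator {p<..<q} t \<partial>lborel)"
    using L pq by (simp add: nn_integral_cmult_indicator L_def ennreal_mult'')
  also have "\<dots> \<le> (\<integral>\<^sup>+t. ennreal (V (x t)) \<partial>lborel)"
    by (intro nn_integral_mono) (auto simp: indicator_def intro!: ennreal_leI Vm inn)
  finally show ?thesis using KK L by blast
qed

lemma si_bound:
  fixes f :: "real \<Rightarrow> real"
  assumes fm: "f \<in> borel_measurable borel" and A: "A \<in> sets borel"
    and b: "\<And>t. t \<in> A \<Longrightarrow> \<bar>f t\<bar> \<le> C * indicator {-1..1} t"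
  shows "set_integrable lborel A f"
  unfolding set_integrable_def
proof (rule Bochner_Integration.integrable_bound)
  show "integrable lborel (\<lambda>t::real. indicator {-1..1} t *\<^sub>R C)"
    by (simp add: emeasure_lborel_Icc_eq)
  show "(\<lambda>t. indicator A t *\<^sub>R f t) \<in> borel_measurable lborel" using fm A by simp
  show "AE t::real in lborel. norm (indicator A t *\<^sub>R f t) \<le> norm (indicator {-1..1} t *\<^sub>R C)"
  proof (rule AE_I2)
    fix t
    show "norm (indicator A t *\<^sub>R f t) \<le> norm (indicator {-1..1} t *\<^sub>R C)"
    proof (cases "t \<in> A")
      case True
      then show ?thesis using b[of t] by (auto simp: indicator_def split: if_splits)
    qed (simp add: indicator_def)
  qed
qed

lemma sq4: "\<bar>a\<bar> \<le> 2 \<Longrightarrow> a * a \<le> (4::real)"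
proof -
  assume "\<bar>a\<bar> \<le> 2"
  then have "\<bar>a\<bar> * \<bar>a\<bar> \<le> 2 * 2" by (intro mult_mono) auto
  then show ?thesis by (simp add: abs_mult_self_eq)
qed

definition xp :: "real \<Rightarrow> real" where "xp t = max (-1) (min 1 t)"
definition gp :: "real \<Rightarrow> real" where "gp t = indicator {-1..1} t"

lemma xp_arith: "s \<le> t \<Longrightarrow> xp t - xp s = (if max s (-1) \<le> min t 1 then min t 1 - max s (-1) else 0)"
  by (cases "s \<le> -1"; cases "s \<le> 1"; cases "t \<le> -1"; cases "t \<le> 1") (simp_all add: xp_def max_def min_def)

lemma xp_cont: "continuous_on UNIV xp"
  unfolding xp_def by (intro continuous_intros)

lemma gp_meas: "gp \<in> borel_measurable borel"
  unfolding gp_def by simp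

lemma path_wd: "weak_deriv_loc xp gp"
  unfolding weak_deriv_loc_def
proof (intro conjI allI impI)
  show "gp \<in> borel_measurable lborel" using gp_meas by simp
  fix s t :: real assume st: "s \<le> t"
  show "set_integrable lborel {s..t} (\<lambda>u. (gp u)\<^sup>2)"
    by (rule si_bound[where C=1]) (auto simp: gp_def indicator_def)
  have "(LBINT u=s..t. gp u) = (LINT u:{s..t}|lborel. gp u)"
    using st by (simp add: interval_integral_Icc)
  also have "\<dots> = integral\<^sup>L lborel (indicator ({s..t} \<inter> {-1..1}) :: real \<Rightarrow> real)"
    unfolding set_lebesgue_integral_def gp_def
    by (intro Bochner_Integration.integral_cong) (auto simp: indicator_def)
  also have "\<dots> = measure lborel {max s (-1)..min t 1}"
    by (simp add: Int_atLeastAtMost)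
  also have "\<dots> = xp t - xp s"
    using st by (simp add: xp_arith measure_def emeasure_lborel_Icc_eq)
  finally show "xp t - xp s = (LBINT u=s..t. gp u)" by simp
qed

lemma path_inW: "inW xp gp"
  unfolding inW_def
proof (intro conjI path_wd)
  have m1: "(\<lambda>t. (xp t + 1)\<^sup>2) \<in> borel_measurable borel"
    by (rule borel_measurable_continuous_onI) (intro continuous_intros xp_cont)
  have m2: "(\<lambda>t. (xp t - 1)\<^sup>2) \<in> borel_measurable borel"
    by (rule borel_measurable_continuous_onI) (intro continuous_intros xp_cont)
  show "set_integrable lborel {..0} (\<lambda>t. (xp t + 1)\<^sup>2)"
  proof (rule si_bound[where C=4, OF m1])
    fix t :: real assume "t \<in> {..0}"
    then show "\<bar>(xp t + 1)\<^sup>2\<bar> \<le> 4 * indicator {-1..1} t"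
      by (cases "t < -1") (auto simp: xp_def indicator_def power2_eq_square intro!: sq4)
  qed simp
  show "set_integrable lborel {0..} (\<lambda>t. (xp t - 1)\<^sup>2)"
  proof (rule si_bound[where C=4, OF m2])
    fix t :: real assume "t \<in> {0..}"
    then show "\<bar>(xp t - 1)\<^sup>2\<bar> \<le> 4 * indicator {-1..1} t"
      by (cases "t > 1") (auto simp: xp_def indicator_def power2_eq_square intro!: sq4)
  qed simp
  show "set_integrable lborel {..0} (\<lambda>t. (gp t)\<^sup>2)"
    by (rule si_bound[where C=1]) (auto simp: gp_def indicator_def)
  show "set_integrable lborel {0..} (\<lambda>t. (gp t)\<^sup>2)"
    by (rule si_bound[where C=1]) (auto simp: gp_def indicator_def)
qed

lemma Binf_finite:
  fixes V :: "real \<Rightarrow> real" and c :: real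
  assumes Vc: "continuous_on UNIV V" and Vz: "V (-1) = 0" "V 1 = 0" and Vnn: "\<And>y. V y \<ge> 0" and c: "c \<ge> 0"
  shows "Binf (\<lambda>t. c) V < \<infinity>"
proof -
  have "\<exists>z\<in>{-1..1::real}. \<forall>y\<in>{-1..1}. V y \<le> V z"
    by (rule continuous_attains_sup) (auto intro: continuous_on_subset[OF Vc])
  then obtain z where zmax: "\<And>y. y \<in> {-1..1} \<Longrightarrow> V y \<le> V z" by blast
  define C where "C = 1/2 + c * V z"
  have pt: "ennreal ((gp t)\<^sup>2 / 2 + c * V (xp t)) \<le> ennreal C * indicator {-1..1} t" for t
  proof (cases "t \<in> {-1..1}")
    case True
    then have e: "xp t = t" "gp t = 1" by (auto simp: xp_def gp_def)
    have "c * V t \<le> c * V z" using zmax[OF True] c by (rule mult_left_mono)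
    then have "(gp t)\<^sup>2 / 2 + c * V (xp t) \<le> C" by (simp add: e C_def)
    then have "ennreal ((gp t)\<^sup>2 / 2 + c * V (xp t)) \<le> ennreal C" by (rule ennreal_leI)
    then show ?thesis using True by simp
  next
    case False
    then have "t < -1 \<or> t > 1" by auto
    then have "xp t = -1 \<or> xp t = 1" by (auto simp: xp_def)
    then have "V (xp t) = 0" using Vz by auto
    moreover have "gp t = 0" using False by (simp add: gp_def)
    ultimately show ?thesis by simp
  qed
  have mem: "(xp, gp) \<in> {(x, g). inW x g}" using path_inW by simp
  have "Binf (\<lambda>t. c) V \<le> action (\<lambda>t. c) V (fst (xp, gp)) (snd (xp, gp))"
    unfolding Binf_def by (rule INF_lower[OF mem])
  also have "\<dots> \<le> (\<integral>\<^sup>+t. ennreal C * indicator {-1..1::real} t \<partial>lborel)"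
    unfolding action_def fst_conv snd_conv using pt by (auto intro!: nn_integral_mono)
  also have "\<dots> = ennreal C * 2"
    by (simp add: nn_integral_cmult_indicator emeasure_lborel_Icc_eq)
  also have "\<dots> < \<infinity>" by (simp add: ennreal_mult_less_top)
  finally show ?thesis .
qed

lemma Vx_meas:
  assumes W: "inW x g" and Vc: "continuous_on UNIV V"
  shows "(\<lambda>t. V (x t)) \<in> borel_measurable borel"
proof -
  have xc: "continuous_on UNIV x" using wd_cont W unfolding inW_def by blast
  show ?thesis
    by (rule borel_measurable_continuous_onI, rule continuous_on_compose2[OF Vc xc]) auto
qed

lemma g_meas:
  assumes W: "inW x g" shows "g \<in> borel_measurable borel"
  using W unfolding inW_def weak_deriv_loc_def by simp

lemma action_dec:
  assumes W: "inW x g" and Vc: "continuous_on UNIV V" and cm: "c \<in> borel_measurable borel"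
    and nn: "\<And>t. c t * V (x t) \<ge> 0"
  shows "action c V x g = (\<integral>\<^sup>+t. ennreal ((g t)\<^sup>2/2) \<partial>lborel) + (\<integral>\<^sup>+t. ennreal (c t * V (x t)) \<partial>lborel)"
proof -
  have gm: "g \<in> borel_measurable borel" by (rule g_meas[OF W])
  have vm: "(\<lambda>t. V (x t)) \<in> borel_measurable borel" by (rule Vx_meas[OF W Vc])
  have "action c V x g = (\<integral>\<^sup>+t. ennreal ((g t)\<^sup>2/2) + ennreal (c t * V (x t)) \<partial>lborel)"
    unfolding action_def using nn by (intro nn_integral_cong) (simp add: ennreal_plus)
  also have "\<dots> = (\<integral>\<^sup>+t. ennreal ((g t)\<^sup>2/2) \<partial>lborel) + (\<integral>\<^sup>+t. ennreal (c t * V (x t)) \<partial>lborel)"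
    using gm vm cm by (intro nn_integral_add) auto
  finally show ?thesis .
qed

lemma action_const:
  assumes W: "inW x g" and Vc: "continuous_on UNIV V" and Vnn: "\<And>y. V y \<ge> 0" and c: "c \<ge> 0"
  shows "action (\<lambda>t. c) V x g = (\<integral>\<^sup>+t. ennreal ((g t)\<^sup>2/2) \<partial>lborel) + ennreal c * (\<integral>\<^sup>+t. ennreal (V (x t)) \<partial>lborel)"
proof -
  have vm: "(\<lambda>t. V (x t)) \<in> borel_measurable borel" by (rule Vx_meas[OF W Vc])
  have "action (\<lambda>t. c) V x g = (\<integral>\<^sup>+t. ennreal ((g t)\<^sup>2/2) \<partial>lborel) + (\<integral>\<^sup>+t. ennreal (c * V (x t)) \<partial>lborel)"
    by (rule action_dec[OF W Vc]) (use c Vnn in auto)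
  also have "(\<integral>\<^sup>+t. ennreal (c * V (x t)) \<partial>lborel) = (\<integral>\<^sup>+t. ennreal c * ennreal (V (x t)) \<partial>lborel)"
    using c Vnn by (intro nn_integral_cong) (simp add: ennreal_mult)
  also have "\<dots> = ennreal c * (\<integral>\<^sup>+t. ennreal (V (x t)) \<partial>lborel)"
    using vm by (intro nn_integral_cmult) auto
  finally show ?thesis .
qed

lemma conv_part:
  fixes a V x :: "real \<Rightarrow> real"
  assumes W: "inW x g" and Vc: "continuous_on UNIV V" and Vnn: "\<And>y. V y \<ge> 0"
    and ac: "continuous_on UNIV a" and aM: "\<And>s. \<bar>a s\<bar> \<le> M" and apos: "\<And>s. a s \<ge> 0"
    and fin: "(\<integral>\<^sup>+t. ennreal (V (x t)) \<partial>lborel) < \<infinity>"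
  shows "((\<lambda>e. \<integral>\<^sup>+t. ennreal (a (e * t) * V (x t)) \<partial>lborel) \<longlongrightarrow>
          ennreal (a 0) * (\<integral>\<^sup>+t. ennreal (V (x t)) \<partial>lborel)) (at_right 0)"
proof -
  have vm: "(\<lambda>t. V (x t)) \<in> borel_measurable borel" by (rule Vx_meas[OF W Vc])
  have am: "a \<in> borel_measurable borel" by (rule borel_measurable_continuous_onI[OF ac])
  have vi: "integrable lborel (\<lambda>t. V (x t))"
    by (rule integrableI_nonneg) (use vm Vnn fin in auto)
  have wi: "integrable lborel (\<lambda>t. M * V (x t))" using vi by simp
  have fm: "\<And>e. (\<lambda>t. a (e * t) * V (x t)) \<in> borel_measurable borel"
    using am vm by measurable
  have bd: "norm (a (e * t) * V (x t)) \<le> M * V (x t)" for e t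
  proof -
    have "\<bar>a (e * t)\<bar> * V (x t) \<le> M * V (x t)" using aM[of "e * t"] Vnn[of "x t"] by (rule mult_right_mono)
    then show ?thesis using Vnn[of "x t"] by (simp add: abs_mult)
  qed
  have bd': "norm (a (e * t) * V (x t)) \<le> norm (M * V (x t))" for e t
    using order_trans[OF bd abs_ge_self] by simp
  have fi: "\<And>e. integrable lborel (\<lambda>t. a (e * t) * V (x t))"
    by (rule Bochner_Integration.integrable_bound[OF wi]) (use fm bd' in auto)
  have eq: "\<And>e. (\<integral>\<^sup>+t. ennreal (a (e * t) * V (x t)) \<partial>lborel) = ennreal (\<integral>t. a (e * t) * V (x t) \<partial>lborel)"
    by (rule nn_integral_eq_integral[OF fi]) (use apos Vnn in auto)
  have eq0: "ennreal (a 0) * (\<integral>\<^sup>+t. ennreal (V (x t)) \<partial>lborel) = ennreal (\<integral>t. a (0 * t) * V (x t) \<partial>lborel)"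
    using nn_integral_eq_integral[OF vi] Vnn apos[of 0] by (simp add: ennreal_mult)
  have "((\<lambda>e. \<integral>t. a (e * t) * V (x t) \<partial>lborel) \<longlongrightarrow> (\<integral>t. a (0 * t) * V (x t) \<partial>lborel)) (at_right 0)"
  proof (rule tendsto_at_right_sequentially[of 0 1])
    fix S :: "nat \<Rightarrow> real" assume S: "S \<longlonglongrightarrow> 0"
    show "(\<lambda>n. \<integral>t. a (S n * t) * V (x t) \<partial>lborel) \<longlonglongrightarrow> (\<integral>t. a (0 * t) * V (x t) \<partial>lborel)"
    proof (rule integral_dominated_convergence[where w="\<lambda>t. M * V (x t)" and f="\<lambda>t. a (0 * t) * V (x t)"])
      show "(\<lambda>t. a (0 * t) * V (x t)) \<in> borel_measurable lborel" using fm[of 0] by simp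
      show "\<And>i. (\<lambda>t. a (S i * t) * V (x t)) \<in> borel_measurable lborel" using fm by simp
      show "integrable lborel (\<lambda>t. M * V (x t))" by (rule wi)
      show "AE t in lborel. (\<lambda>i. a (S i * t) * V (x t)) \<longlonglongrightarrow> a (0 * t) * V (x t)"
      proof (rule AE_I2)
        fix t
        have "(\<lambda>i. S i * t) \<longlonglongrightarrow> 0 * t" by (intro tendsto_intros S)
        moreover have "isCont a (0 * t)" using ac by (simp add: continuous_on_eq_continuous_at)
        ultimately have "(\<lambda>i. a (S i * t)) \<longlonglongrightarrow> a (0 * t)" by (rule isCont_tendsto_compose[rotated])
        then show "(\<lambda>i. a (S i * t) * V (x t)) \<longlonglongrightarrow> a (0 * t) * V (x t)" by (intro tendsto_intros)
      qed
      show "\<And>i. AE t in lborel. norm (a (S i * t) * V (x t)) \<le> M * V (x t)" using bd by simp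
    qed
  qed simp
  then have "((\<lambda>e. ennreal (\<integral>t. a (e * t) * V (x t) \<partial>lborel)) \<longlongrightarrow> ennreal (\<integral>t. a (0 * t) * V (x t) \<partial>lborel)) (at_right 0)"
    by (rule tendsto_ennrealI)
  then show ?thesis unfolding eq eq0 .
qed

theorem lemma3p1:
  fixes V V' V'' a :: "real \<Rightarrow> real" and a_inf :: real
  assumes V1: "\<And>x. (V has_real_derivative V' x) (at x)"
    and V2: "\<And>x. (V' has_real_derivative V'' x) (at x)"
    and V3: "continuous_on UNIV V''"
    and Vnn: "\<And>x. V x \<ge> 0"
    and Vzero: "V (-1) = 0" "V 1 = 0"
    and Vpos_in: "\<And>x. -1 < x \<Longrightarrow> x < 1 \<Longrightarrow> V x > 0"
    and Vpp: "V'' (-1) > 0" "V'' 1 > 0"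
    and Vout: "\<And>x. \<bar>x\<bar> > 1 \<Longrightarrow> V x > 0 \<and> V' x * x > 0"
    and Vinf: "filterlim V at_top at_infinity"
    and a_bdd: "bounded (range a)"
    and a_cont: "continuous_on UNIV a"
    and a_liminf: "Liminf at_infinity (\<lambda>t. ereal (a t)) = ereal a_inf"
    and a_inf_gt: "a_inf > (INF t. a t)"
    and a_min: "(INF t. a t) = a 0"
    and a0_pos: "a 0 > 0"
  shows "Binf (\<lambda>t. a 0) V < Binf (\<lambda>t. a_inf) V \<and>
         ((\<lambda>e. Binf (\<lambda>t. a (e * t)) V) \<longlongrightarrow> Binf (\<lambda>t. a 0) V) (at_right 0)"
proof -
  have "\<And>y. isCont V y" using V1 DERIV_isCont by blast
  then have Vc: "continuous_on UNIV V" by (simp add: continuous_at_imp_continuous_on)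
  define a0 where "a0 = a 0"
  have abdd: "bdd_below (range a)" using a_bdd by (rule bounded_imp_bdd_below)
  have age: "a0 \<le> a s" for s
    using cINF_lower[OF abdd, of s] a_min by (simp add: a0_def)
  have a0p: "a0 > 0" using a0_pos by (simp add: a0_def)
  have a1: "a_inf > a0" using a_inf_gt a_min by (simp add: a0_def)
  obtain M where aM: "\<And>s. \<bar>a s\<bar> \<le> M"
    using a_bdd unfolding bounded_iff by auto
  have "\<exists>z\<in>{-1/2..1/2::real}. \<forall>y\<in>{-1/2..1/2}. V z \<le> V y"
    by (rule continuous_attains_inf) (auto intro: continuous_on_subset[OF Vc])
  then obtain z where z: "z \<in> {-1/2..1/2}" and zmin: "\<And>y. y \<in> {-1/2..1/2} \<Longrightarrow> V z \<le> V y" by blast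
  define m where "m = V z"
  have mpos: "m > 0" unfolding m_def using z by (intro Vpos_in) auto
  have Vm: "\<And>y. \<bar>y\<bar> < 1/2 \<Longrightarrow> m \<le> V y"
  proof -
    fix y :: real assume "\<bar>y\<bar> < 1/2"
    then have "y \<in> {-1/2..1/2}" by auto
    then show "m \<le> V y" unfolding m_def by (rule zmin)
  qed
  define Kn where "Kn g = (\<integral>\<^sup>+t. ennreal ((g t)\<^sup>2/2) \<partial>lborel)" for g :: "real \<Rightarrow> real"
  define Vn where "Vn x = (\<integral>\<^sup>+t. ennreal (V (x t)) \<partial>lborel)" for x :: "real \<Rightarrow> real"
  have dec: "\<And>x g c. inW x g \<Longrightarrow> c \<ge> 0 \<Longrightarrow> action (\<lambda>t. c) V x g = Kn g + ennreal c * Vn x"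
    unfolding Kn_def Vn_def by (rule action_const[OF _ Vc Vnn])
  have W_iff: "\<And>x g. (x, g) \<in> {(x, g). inW x g} \<longleftrightarrow> inW x g" by simp
  have part1: "Binf (\<lambda>t. a0) V < Binf (\<lambda>t. a_inf) V"
  proof -
    let ?B1 = "Binf (\<lambda>t. a_inf) V"
    have B1fin: "?B1 < \<infinity>" by (rule Binf_finite[OF Vc Vzero Vnn]) (use a1 a0p in auto)
    define b where "b = enn2real ?B1"
    have B1b: "?B1 = ennreal b" using B1fin by (simp add: b_def)
    have b0: "b \<ge> 0" by (simp add: b_def)
    define \<kappa> where "\<kappa> = (a_inf - a0) * m"
    have kp: "\<kappa> > 0" using a1 mpos by (simp add: \<kappa>_def)
    define \<delta> where "\<delta> = min 1 (\<kappa> / (4 * (b + 1)))"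
    have dp: "\<delta> > 0" using kp b0 by (simp add: \<delta>_def)
    have "?B1 < ennreal (b + \<delta>)" using B1b dp b0 by (simp add: ennreal_lessI)
    then obtain xg where xgW: "xg \<in> {(x, g). inW x g}"
      and xglt: "action (\<lambda>t. a_inf) V (fst xg) (snd xg) < ennreal (b + \<delta>)"
      unfolding Binf_def by (auto simp: INF_less_iff)
    obtain x g where xg: "xg = (x, g)" by (cases xg)
    have W: "inW x g" using xgW xg by simp
    have act1: "Kn g + ennreal a_inf * Vn x < ennreal (b + \<delta>)"
      using xglt dec[OF W, of a_inf] a1 a0p xg by simp
    have s1: "Kn g \<le> Kn g + ennreal a_inf * Vn x" by (rule le_iff_add[THEN iffD2]) blast
    have s2: "ennreal a_inf * Vn x \<le> Kn g + ennreal a_inf * Vn x" by (rule le_iff_add[THEN iffD2]) (blast intro: add.commute)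
    have act1': "Kn g + ennreal a_inf * Vn x < \<infinity>" using order.strict_trans[OF act1 ennreal_less_top[of "b + \<delta>"]] by simp
    have Kfin: "Kn g < \<infinity>" using s1 act1' by (rule order.strict_trans1)
    have "ennreal a_inf * Vn x < \<infinity>" using s2 act1' by (rule order.strict_trans1)
    then have Vfin: "Vn x < \<infinity>" using a1 a0p by (auto simp: ennreal_mult_less_top)
    define k where "k = enn2real (Kn g)"
    define v where "v = enn2real (Vn x)"
    have Kk: "Kn g = ennreal k" using Kfin by (simp add: k_def)
    have Vv: "Vn x = ennreal v" using Vfin by (simp add: v_def)
    have k0: "k \<ge> 0" and v0: "v \<ge> 0" by (simp_all add: k_def v_def)
    have ai0: "a_inf \<ge> 0" using a1 a0p by simp
    have e1: "Kn g + ennreal a_inf * Vn x = ennreal (k + a_inf * v)"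
      using k0 v0 ai0 by (simp add: Kk Vv ennreal_mult ennreal_plus)
    have "ennreal (k + a_inf * v) < ennreal (b + \<delta>)" using act1 unfolding e1 .
    moreover have "0 \<le> k + a_inf * v" using k0 v0 ai0 by simp
    ultimately have A: "k + a_inf * v < b + \<delta>" using ennreal_less_iff by blast
    obtain L where L: "L > 0" and KL: "ennreal (1/(2*L)) \<le> Kn g" and VL: "ennreal (m*L) \<le> Vn x"
      using energy_lower[where V=V and m=m, OF W Vm] unfolding Kn_def Vn_def by blast
    have kL: "1/(2*L) \<le> k" using KL k0 by (simp add: Kk)
    have vL: "m * L \<le> v" using VL v0 by (simp add: Vv)
    define A where "A = k + a_inf * v"
    have kA: "k \<le> A" unfolding A_def using ai0 v0 by simp
    have AkL: "1/(2*L) \<le> A" using kL kA by linarith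
    have "1/(2*L) > 0" using L by simp
    then have Apos: "A > 0" using AkL by linarith
    have LA: "1/(2*A) \<le> L" using AkL L Apos by (simp add: field_simps)
    have "m / (2*A) \<le> v"
    proof -
      have "m * (1/(2*A)) \<le> m * L" using LA mpos by (intro mult_left_mono) auto
      then show ?thesis using vL by simp
    qed
    then have "(a_inf - a0) * (m / (2*A)) \<le> (a_inf - a0) * v" using a1 by (intro mult_left_mono) auto
    then have kv: "\<kappa> / (2*A) \<le> (a_inf - a0) * v" by (simp add: \<kappa>_def)
    have Ab: "A \<le> b + 1" using A \<delta>_def unfolding A_def by linarith
    have "\<kappa> / (2*(b+1)) \<le> \<kappa> / (2*A)"
      using Ab Apos kp by (intro divide_left_mono) auto
    with kv have kv2: "\<kappa> / (2*(b+1)) \<le> (a_inf - a0) * v" by linarith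
    have "\<delta> \<le> \<kappa> / (4 * (b + 1))" by (simp add: \<delta>_def)
    moreover have "\<kappa> / (4 * (b + 1)) < \<kappa> / (2*(b+1))"
    proof -
      have h: "0 \<le> \<kappa> * (b * 2)" using kp b0 by simp
      show ?thesis using kp b0 by (simp add: field_simps) (use h kp in linarith)
    qed
    ultimately have lt: "k + a0 * v < b"
      using A kv2 by (simp add: algebra_simps) 
    have k0v: "k + a0 * v \<ge> 0" using k0 v0 a0p by simp
    have "Binf (\<lambda>t. a0) V \<le> action (\<lambda>t. a0) V (fst (x, g)) (snd (x, g))"
      unfolding Binf_def by (rule INF_lower) (use W in simp)
    also have "\<dots> = ennreal (k + a0 * v)"
      using dec[OF W, of a0] a0p k0 v0 by (simp add: Kk Vv ennreal_mult ennreal_plus)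
    also have "\<dots> < ennreal b" using lt k0v by (intro ennreal_lessI) auto
    finally show ?thesis using B1b by simp
  qed
  have mono: "Binf (\<lambda>t. a0) V \<le> Binf (\<lambda>t. a (e * t)) V" for e
    unfolding Binf_def
  proof (rule INF_mono)
    fix xg assume xgW: "xg \<in> {(x, g). inW x g}"
    show "\<exists>xg'\<in>{(x, g). inW x g}. action (\<lambda>t. a0) V (fst xg') (snd xg') \<le> action (\<lambda>t. a (e * t)) V (fst xg) (snd xg)"
      using xgW unfolding action_def
      by (intro bexI[of _ xg] nn_integral_mono ennreal_leI add_left_mono mult_right_mono age Vnn)
  qed
  have part2: "((\<lambda>e. Binf (\<lambda>t. a (e * t)) V) \<longlongrightarrow> Binf (\<lambda>t. a0) V) (at_right 0)"
  proof (rule order_tendstoI)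
    fix y assume "y < Binf (\<lambda>t. a0) V"
    then show "\<forall>\<^sub>F e in at_right 0. y < Binf (\<lambda>t. a (e * t)) V"
      using mono by (auto intro: always_eventually order.strict_trans2)
  next
    fix y assume "Binf (\<lambda>t. a0) V < y"
    then obtain xg where xgW: "xg \<in> {(x, g). inW x g}"
      and xglt: "action (\<lambda>t. a0) V (fst xg) (snd xg) < y"
      unfolding Binf_def by (auto simp: INF_less_iff)
    obtain x g where xg: "xg = (x, g)" by (cases xg)
    have W: "inW x g" using xgW xg by simp
    have act0: "Kn g + ennreal a0 * Vn x < y" using xglt dec[OF W, of a0] a0p xg by simp
    have s2: "ennreal a0 * Vn x \<le> Kn g + ennreal a0 * Vn x" by (rule le_iff_add[THEN iffD2]) (blast intro: add.commute)
    have "ennreal a0 * Vn x < y" using s2 act0 by (rule order.strict_trans1)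
    then have "ennreal a0 * Vn x < \<infinity>" using top.not_eq_extremum by fastforce
    then have Vfin: "Vn x < \<infinity>" using a0p by (auto simp: ennreal_mult_less_top)
    have apos: "\<And>s. a s \<ge> 0" using age a0p by (meson less_le_trans less_imp_le)
    have cv: "((\<lambda>e. \<integral>\<^sup>+t. ennreal (a (e * t) * V (x t)) \<partial>lborel) \<longlongrightarrow> ennreal (a 0) * Vn x) (at_right 0)"
      unfolding Vn_def by (rule conv_part[OF W Vc Vnn a_cont aM apos]) (use Vfin in \<open>simp add: Vn_def\<close>)
    have decE: "action (\<lambda>t. a (e * t)) V x g = Kn g + (\<integral>\<^sup>+t. ennreal (a (e * t) * V (x t)) \<partial>lborel)" for e
      unfolding Kn_def
    proof (rule action_dec[OF W Vc])
      show "(\<lambda>t. a (e * t)) \<in> borel_measurable borel"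
        using borel_measurable_continuous_onI[OF a_cont] by measurable
      show "\<And>t. 0 \<le> a (e * t) * V (x t)" using apos Vnn by simp
    qed
    have "((\<lambda>e. action (\<lambda>t. a (e * t)) V x g) \<longlongrightarrow> Kn g + ennreal a0 * Vn x) (at_right 0)"
      unfolding decE a0_def by (intro tendsto_add tendsto_const cv)
    then have ev: "\<forall>\<^sub>F e in at_right 0. action (\<lambda>t. a (e * t)) V x g < y"
      using act0 by (rule order_tendstoD(2))
    have le: "Binf (\<lambda>t. a (e * t)) V \<le> action (\<lambda>t. a (e * t)) V x g" for e
    proof -
      have "Binf (\<lambda>t. a (e * t)) V \<le> action (\<lambda>t. a (e * t)) V (fst (x, g)) (snd (x, g))"
        unfolding Binf_def by (rule INF_lower) (use W in simp)
      then show ?thesis by simp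
    qed
    show "\<forall>\<^sub>F e in at_right 0. Binf (\<lambda>t. a (e * t)) V < y"
      using ev by eventually_elim (use le in \<open>rule order.strict_trans1\<close>)
  qed
  show ?thesis using part1 part2 by (simp add: a0_def)
qed

end
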